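(* Let $s\ge2$ be an even constant and $\epsilon$ a constant with $0<\epsilon<1/(2s-1)$. Let $I$ be an instance of the class $G^*_\epsilon$ with $n$ jobs, let $\mathcal{L}\subseteq\{0,1\}^n$ be the set of local optima of $I$, and for $x\in\{0,1\}^n$ let $h$ and $k$ be the numbers of large and small jobs, respectively, on the fuller machine of $x$. Then: (1) $|\{y\in\mathbb{R}:\exists x\in\{0,1\}^n \text{ with } f(x)=y\}|=O(n)$; (2) $|\{y\in\mathbb{R}:\exists x\in\mathcal{L} \text{ with } f(x)=y\}|=O(1)$; (3) for all $x\in\{0,1\}^n$ with $f(x)>1/2$, either $k=\Omega(n)$ and $x\notin\mathcal{L}$, or $\max(k,n-s-k)\ge\left(\frac12+a\right)(n-s)$ for some $a=\Omega(1)$.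
   Context: Partition problem: a solution $x\in\{0,1\}^n$ assigns job $i$ to machine $M_1$ if $x_i=0$ and to $M_2$ if $x_i=1$; the makespan $f(x)=\max\{\sum_i p_ix_i,\sum_i p_i(1-x_i)\}$ is minimised. The fuller machine is the machine whose load attains the makespan. A local optimum is a solution such that no solution at Hamming distance $1$ has strictly smaller makespan. The class $G^*_\epsilon$: instances with an even number $n$ of jobs, an even number $s=\Theta(1)$ of large jobs (jobs $1,\dots,s$), and processing times $p_i=\frac{1}{2s-1}-\frac{\epsilon}{2s}$ for $i\le s$ and $p_i=\frac{s-1}{n-s}\left(\frac{1}{2s-1}+\frac{\epsilon}{2(s-1)}\right)$ for $s<i\le n$ (the small jobs), where $0<\epsilon<1/(2s-1)$ is an arbitrarily small constant; note $\sum_i p_i=1$. Asymptotics are as $n\to\infty$. *)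

theory Defs
  imports Complex_Main "HOL-Library.FuncSet"
begin

text \<open>Processing times of the class G*_eps: jobs 1..s are large, s+1..n small.\<close>
definition ptime :: "nat \<Rightarrow> real \<Rightarrow> nat \<Rightarrow> nat \<Rightarrow> real" where
  "ptime s \<epsilon> n i =
     (if i \<le> s then 1 / (2 * real s - 1) - \<epsilon> / (2 * real s)
      else (real s - 1) / (real n - real s) *
           (1 / (2 * real s - 1) + \<epsilon> / (2 * (real s - 1))))"

definition sols :: "nat \<Rightarrow> (nat \<Rightarrow> nat) set" where
  "sols n = {1..n} \<rightarrow>\<^sub>E {0, 1}"

definition load1 :: "nat \<Rightarrow> real \<Rightarrow> nat \<Rightarrow> (nat \<Rightarrow> nat) \<Rightarrow> real" where
  "load1 s \<epsilon> n x = (\<Sum>i\<in>{1..n}. ptime s \<epsilon> n i * (1 - real (x i)))"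

definition load2 :: "nat \<Rightarrow> real \<Rightarrow> nat \<Rightarrow> (nat \<Rightarrow> nat) \<Rightarrow> real" where
  "load2 s \<epsilon> n x = (\<Sum>i\<in>{1..n}. ptime s \<epsilon> n i * real (x i))"

definition makespan :: "nat \<Rightarrow> real \<Rightarrow> nat \<Rightarrow> (nat \<Rightarrow> nat) \<Rightarrow> real" where
  "makespan s \<epsilon> n x = max (load2 s \<epsilon> n x) (load1 s \<epsilon> n x)"

definition hamming :: "nat \<Rightarrow> (nat \<Rightarrow> nat) \<Rightarrow> (nat \<Rightarrow> nat) \<Rightarrow> nat" where
  "hamming n x y = card {i\<in>{1..n}. x i \<noteq> y i}"

definition local_optima :: "nat \<Rightarrow> real \<Rightarrow> nat \<Rightarrow> (nat \<Rightarrow> nat) set" where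
  "local_optima s \<epsilon> n = {x \<in> sols n. \<forall>y\<in>sols n. hamming n x y = 1 \<longrightarrow>
        \<not> makespan s \<epsilon> n y < makespan s \<epsilon> n x}"

text \<open>The fuller machine, encoded by the value of x_i for the jobs on it
  (1 = M_2, 0 = M_1); ties broken towards M_1 (irrelevant when f(x) > 1/2).\<close>
definition fuller :: "nat \<Rightarrow> real \<Rightarrow> nat \<Rightarrow> (nat \<Rightarrow> nat) \<Rightarrow> nat" where
  "fuller s \<epsilon> n x = (if load2 s \<epsilon> n x > load1 s \<epsilon> n x then 1 else 0)"

definition hlarge :: "nat \<Rightarrow> real \<Rightarrow> nat \<Rightarrow> (nat \<Rightarrow> nat) \<Rightarrow> nat" where
  "hlarge s \<epsilon> n x = card {i\<in>{1..s}. x i = fuller s \<epsilon> n x}"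

definition ksmall :: "nat \<Rightarrow> real \<Rightarrow> nat \<Rightarrow> (nat \<Rightarrow> nat) \<Rightarrow> nat" where
  "ksmall s \<epsilon> n x = card {i\<in>{s+1..n}. x i = fuller s \<epsilon> n x}"

end

theory Submission imports Defs begin

definition "LL s \<epsilon> = 1/(2*real s - 1) - \<epsilon>/(2*real s)"
definition "KK s \<epsilon> = (real s - 1)/(2*real s - 1) + \<epsilon>/2"
definition "SS s \<epsilon> n = KK s \<epsilon> / (real n - real s)"

context
  fixes s :: nat and \<epsilon> :: real
  assumes s2: "s \<ge> 2" and epos: "0 < \<epsilon>" and esmall: "\<epsilon> < 1 / (2 * real s - 1)"
begin

lemma LL_pos: "LL s \<epsilon> > 0"
proof -
  have a: "2 * real s - 1 > 0" using s2 by simp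
  have "\<epsilon> / (2*real s) < \<epsilon>" using epos s2 by (simp add: divide_less_eq)
  also have "\<dots> < 1/(2*real s - 1)" by (rule esmall)
  finally show ?thesis unfolding LL_def by simp
qed

lemma KK_pos: "KK s \<epsilon> > 0"
  using s2 epos unfolding KK_def by (simp add: add_pos_pos)

lemma SS_pos: "s < n \<Longrightarrow> SS s \<epsilon> n > 0"
  using KK_pos unfolding SS_def by simp

lemma pt_large: "i \<le> s \<Longrightarrow> ptime s \<epsilon> n i = LL s \<epsilon>"
  unfolding ptime_def LL_def by simp

lemma pt_small: "\<not> i \<le> s \<Longrightarrow> ptime s \<epsilon> n i = SS s \<epsilon> n"
proof -
  assume "\<not> i \<le> s"
  have a: "real s - 1 \<noteq> 0" "2 * real s - 1 \<noteq> 0" using s2 by auto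
  have "(real s - 1) * (1 / (2 * real s - 1) + \<epsilon> / (2 * (real s - 1))) = KK s \<epsilon>"
  proof -
    have "(real s - 1) * (\<epsilon> / (2 * (real s - 1))) = \<epsilon>/2"
      proof -
        have "2 * real s - 2 \<noteq> 0" using s2 by simp
        then show ?thesis using a(1) by (simp add: field_simps)
      qed
    then show ?thesis unfolding KK_def by (simp add: distrib_left)
  qed
  then show ?thesis using \<open>\<not> i \<le> s\<close> unfolding ptime_def SS_def
    by (metis times_divide_eq_left)
qed

lemma total1: "s < n \<Longrightarrow> real s * LL s \<epsilon> + (real n - real s) * SS s \<epsilon> n = 1"
proof -
  assume "s < n"
  have a: "real s \<noteq> 0" "2 * real s - 1 \<noteq> 0" "real n - real s \<noteq> 0" using s2 \<open>s<n\<close> by auto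
  have b: "(real n - real s) * SS s \<epsilon> n = KK s \<epsilon>" unfolding SS_def using a by simp
  have c: "real s * LL s \<epsilon> = real s / (2 * real s - 1) - \<epsilon>/2" unfolding LL_def using a
    by (simp add: right_diff_distrib)
  have d: "real s / (2 * real s - 1) + (real s - 1) / (2 * real s - 1) = 1"
    using a by (simp add: divide_simps)
  show ?thesis unfolding b c KK_def using d by simp
qed

lemma loadv:
  assumes "s < n"
  shows "(\<Sum>i\<in>{1..n}. ptime s \<epsilon> n i * (if x i = v then 1 else 0)) =
     real (card {i\<in>{1..s}. x i = v}) * LL s \<epsilon> + real (card {i\<in>{s+1..n}. x i = v}) * SS s \<epsilon> n"
proof -
  have u: "{1..n} = {1..s} \<union> {s+1..n}" using assms by auto
  have d: "{1..s} \<inter> {s+1..n} = {}" by auto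
  have e1: "(\<Sum>i\<in>{1..s}. ptime s \<epsilon> n i * (if x i = v then 1 else 0)) = 
     (\<Sum>i\<in>{1..s}. LL s \<epsilon> * (if x i = v then 1 else 0))"
    by (rule sum.cong) (auto simp: pt_large)
  have e2: "(\<Sum>i\<in>{s+1..n}. ptime s \<epsilon> n i * (if x i = v then 1 else 0)) = 
     (\<Sum>i\<in>{s+1..n}. SS s \<epsilon> n * (if x i = v then 1 else 0))"
    by (rule sum.cong) (auto simp: pt_small)
  have c: "\<And>A. finite A \<Longrightarrow> (\<Sum>i\<in>A. (if x i = v then 1 else 0::real)) = real (card {i\<in>A. x i = v})"
    by (simp add: sum.inter_filter[symmetric])
  show ?thesis
    unfolding u sum.union_disjoint[OF finite_atLeastAtMost finite_atLeastAtMost d] e1 e2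
      sum_distrib_left[symmetric] c[OF finite_atLeastAtMost] by simp
qed

lemma sols_01: "x \<in> sols n \<Longrightarrow> i \<in> {1..n} \<Longrightarrow> x i = 0 \<or> x i = 1"
  unfolding sols_def by (auto simp: PiE_def Pi_def)

lemma load2_eq: "x \<in> sols n \<Longrightarrow> load2 s \<epsilon> n x = (\<Sum>i\<in>{1..n}. ptime s \<epsilon> n i * (if x i = 1 then 1 else 0))"
  unfolding load2_def by (rule sum.cong) (auto dest: sols_01)

lemma load1_eq: "x \<in> sols n \<Longrightarrow> load1 s \<epsilon> n x = (\<Sum>i\<in>{1..n}. ptime s \<epsilon> n i * (if x i = 0 then 1 else 0))"
  unfolding load1_def by (rule sum.cong) (auto dest: sols_01)

lemma sum12: assumes "s < n" shows "load1 s \<epsilon> n x + load2 s \<epsilon> n x = 1"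
proof -
  have "load1 s \<epsilon> n x + load2 s \<epsilon> n x = (\<Sum>i\<in>{1..n}. ptime s \<epsilon> n i * (if (0::nat) = 0 then 1 else 0))"
    unfolding load1_def load2_def by (simp add: sum.distrib[symmetric] algebra_simps)
  also have "\<dots> = real s * LL s \<epsilon> + (real n - real s) * SS s \<epsilon> n"
  proof -
    have "{i\<in>{1..s}. (0::nat) = 0} = {1..s}" "{i\<in>{s+1..n}. (0::nat) = 0} = {s+1..n}" by auto
    then show ?thesis using loadv[OF assms, of "\<lambda>_. 0" 0] assms by (simp add: of_nat_diff)
  qed
  finally show ?thesis using total1[OF assms] by simp
qed

lemma rep:
  assumes "x \<in> sols n" "s < n"
  shows "makespan s \<epsilon> n x = real (hlarge s \<epsilon> n x) * LL s \<epsilon> + real (ksmall s \<epsilon> n x) * SS s \<epsilon> n"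
proof (cases "load2 s \<epsilon> n x > load1 s \<epsilon> n x")
  case True
  then show ?thesis unfolding makespan_def hlarge_def ksmall_def fuller_def
    using loadv[OF assms(2), of x 1] load2_eq[OF assms(1)] by simp
next
  case False
  then show ?thesis unfolding makespan_def hlarge_def ksmall_def fuller_def
    using loadv[OF assms(2), of x 0] load1_eq[OF assms(1)] by simp
qed

lemma hlarge_le: "hlarge s \<epsilon> n x \<le> s"
proof -
  have "hlarge s \<epsilon> n x \<le> card {1..s}" unfolding hlarge_def by (rule card_mono) auto
  then show ?thesis by simp
qed

lemma ksmall_le: "ksmall s \<epsilon> n x \<le> n - s"
proof -
  have "ksmall s \<epsilon> n x \<le> card {s+1..n}" unfolding ksmall_def by (rule card_mono) auto
  then show ?thesis by simp
qed

lemma mk_half: "s < n \<Longrightarrow> makespan s \<epsilon> n x \<ge> 1/2"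
  using sum12[of n x] unfolding makespan_def by linarith

lemma flip:
  assumes x: "x \<in> sols n" and sn: "s < n" and i: "i \<in> {s+1..n}" and xi: "x i = fuller s \<epsilon> n x"
    and big: "makespan s \<epsilon> n x > (1 + SS s \<epsilon> n)/2"
  shows "x \<notin> local_optima s \<epsilon> n"
proof -
  define y where "y = x(i := 1 - x i)"
  have i1: "i \<in> {1..n}" using i by auto
  have x01: "x i = 0 \<or> x i = 1" using sols_01[OF x i1] .
  have ysol: "y \<in> sols n" using x i1 x01 unfolding sols_def y_def by (auto simp: PiE_def Pi_def extensional_def)
  have "{j\<in>{1..n}. x j \<noteq> y j} = {i}" using i1 x01 unfolding y_def by auto
  then have ham: "hamming n x y = 1" unfolding hamming_def by simp
  have pti: "ptime s \<epsilon> n i = SS s \<epsilon> n" using i by (intro pt_small) auto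
  have rest: "(\<Sum>j\<in>{1..n}-{i}. ptime s \<epsilon> n j * real (y j)) = (\<Sum>j\<in>{1..n}-{i}. ptime s \<epsilon> n j * real (x j))"
    by (rule sum.cong) (auto simp: y_def)
  have l2y: "load2 s \<epsilon> n y = SS s \<epsilon> n * real (y i) + (\<Sum>j\<in>{1..n}-{i}. ptime s \<epsilon> n j * real (x j))"
    unfolding load2_def using sum.remove[OF finite_atLeastAtMost i1, of "\<lambda>j. ptime s \<epsilon> n j * real (y j)"] rest pti by simp
  have l2x: "load2 s \<epsilon> n x = SS s \<epsilon> n * real (x i) + (\<Sum>j\<in>{1..n}-{i}. ptime s \<epsilon> n j * real (x j))"
    unfolding load2_def using sum.remove[OF finite_atLeastAtMost i1, of "\<lambda>j. ptime s \<epsilon> n j * real (x j)"] pti by simp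
  have sx: "load1 s \<epsilon> n x + load2 s \<epsilon> n x = 1" using sum12[OF sn] .
  have sy: "load1 s \<epsilon> n y + load2 s \<epsilon> n y = 1" using sum12[OF sn] .
  have Spos: "SS s \<epsilon> n > 0" using SS_pos[OF sn] .
  have "makespan s \<epsilon> n y < makespan s \<epsilon> n x"
  proof (cases "load2 s \<epsilon> n x > load1 s \<epsilon> n x")
    case True
    then have "x i = 1" using xi unfolding fuller_def by simp
    then have "y i = 0" unfolding y_def by simp
    then have "load2 s \<epsilon> n y = load2 s \<epsilon> n x - SS s \<epsilon> n" using l2y l2x \<open>x i = 1\<close> by simp
    then show ?thesis using True big sx sy Spos unfolding makespan_def by auto
  next
    case False
    then have "x i = 0" using xi unfolding fuller_def by simp
    then have "y i = 1" unfolding y_def by simp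
    then have "load2 s \<epsilon> n y = load2 s \<epsilon> n x + SS s \<epsilon> n" using l2y l2x \<open>x i = 0\<close> by simp
    then show ?thesis using False big sx sy Spos unfolding makespan_def by auto
  qed
  then show ?thesis using ysol ham unfolding local_optima_def by auto
qed

lemma part1: "\<exists>C. \<forall>\<^sub>F n in sequentially. even n \<longrightarrow>
            real (card (makespan s \<epsilon> n ` sols n)) \<le> C * real n"
proof (intro exI[of _ "2 * (real s + 1)"] eventually_sequentiallyI[of "s+1"] impI)
  fix n :: nat assume n: "s + 1 \<le> n"
  then have sn: "s < n" by simp
  have sub: "makespan s \<epsilon> n ` sols n \<subseteq> (\<lambda>(h,k). real h * LL s \<epsilon> + real k * SS s \<epsilon> n) ` ({0..s} \<times> {0..n})"
  proof
    fix v assume "v \<in> makespan s \<epsilon> n ` sols n"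
    then obtain x where x: "x \<in> sols n" "v = makespan s \<epsilon> n x" by auto
    have "hlarge s \<epsilon> n x \<le> s" "ksmall s \<epsilon> n x \<le> n" using hlarge_le[of n x] ksmall_le[of n x] by auto
    then show "v \<in> (\<lambda>(h,k). real h * LL s \<epsilon> + real k * SS s \<epsilon> n) ` ({0..s} \<times> {0..n})"
      using rep[OF x(1) sn] x(2) by (auto intro!: image_eqI[of _ _ "(hlarge s \<epsilon> n x, ksmall s \<epsilon> n x)"])
  qed
  have "card (makespan s \<epsilon> n ` sols n) \<le> card ((\<lambda>(h,k). real h * LL s \<epsilon> + real k * SS s \<epsilon> n) ` ({0..s} \<times> {0..n}))"
    by (rule card_mono[OF _ sub]) auto
  also have "\<dots> \<le> card ({0..s} \<times> {0..n})" by (rule card_image_le) auto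
  also have "\<dots> = (s+1) * (n+1)" by (simp add: card_cartesian_product)
  finally have "real (card (makespan s \<epsilon> n ` sols n)) \<le> real ((s+1) * (n+1))"
    by (simp only: of_nat_le_iff)
  also have "\<dots> = (real s + 1) * (real n + 1)" by (simp add: algebra_simps)
  also have "\<dots> \<le> (real s + 1) * (2 * real n)" using n by (intro mult_left_mono) auto
  also have "\<dots> = 2 * (real s + 1) * real n" by simp
  finally show "real (card (makespan s \<epsilon> n ` sols n)) \<le> 2 * (real s + 1) * real n" .
qed

lemma part2: "\<exists>C. \<forall>\<^sub>F n in sequentially. even n \<longrightarrow>
            real (card (makespan s \<epsilon> n ` local_optima s \<epsilon> n)) \<le> C"
proof (intro exI[of _ "2 * (real s + 1)"] eventually_sequentiallyI[of "s+1"] impI)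
  fix n :: nat assume n: "s + 1 \<le> n"
  then have sn: "s < n" by simp
  define S where "S = SS s \<epsilon> n"
  define L where "L = LL s \<epsilon>"
  have Spos: "S > 0" using SS_pos[OF sn] S_def by simp
  define V1 where "V1 = (\<lambda>h. real h * L) ` {0..s}"
  define V2 where "V2 = (\<lambda>h. real h * L + real (nat \<lceil>(1/2 - real h * L) / S\<rceil>) * S) ` {0..s}"
  have sub: "makespan s \<epsilon> n ` local_optima s \<epsilon> n \<subseteq> V1 \<union> V2"
  proof
    fix v assume "v \<in> makespan s \<epsilon> n ` local_optima s \<epsilon> n"
    then obtain x where xl: "x \<in> local_optima s \<epsilon> n" and v: "v = makespan s \<epsilon> n x" by auto
    then have x: "x \<in> sols n" unfolding local_optima_def by auto
    define h where "h = hlarge s \<epsilon> n x"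
    define k where "k = ksmall s \<epsilon> n x"
    have hs: "h \<le> s" using hlarge_le h_def by simp
    have F: "v = real h * L + real k * S" using rep[OF x sn] v h_def k_def L_def S_def by simp
    show "v \<in> V1 \<union> V2"
    proof (cases "k = 0")
      case True
      then show ?thesis using F hs unfolding V1_def by auto
    next
      case False
      then have "{i\<in>{s+1..n}. x i = fuller s \<epsilon> n x} \<noteq> {}" using k_def unfolding ksmall_def by (metis card.empty)
      then obtain i where i: "i \<in> {s+1..n}" "x i = fuller s \<epsilon> n x" by blast
      have le: "v \<le> (1 + S)/2"
      proof (rule ccontr)
        assume "\<not> ?thesis"
        then have "x \<notin> local_optima s \<epsilon> n" using flip[OF x sn i] v S_def by simp
        then show False using xl by simp
      qed
      have ge: "v \<ge> 1/2" using mk_half[OF sn] v by simp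
      define t where "t = (1/2 - real h * L) / S"
      have t1: "t \<le> real k" unfolding t_def using ge F Spos by (simp add: divide_le_eq)
      have t2: "real k \<le> t + 1/2" unfolding t_def using le F Spos by (simp add: field_simps)
      have c1: "\<lceil>t\<rceil> \<le> int k" using t1 by (simp add: ceiling_le_iff)
      have c2: "int k - 1 < \<lceil>t\<rceil>" using t2 by (simp add: less_ceiling_iff)
      have "nat \<lceil>t\<rceil> = k" using c1 c2 by linarith
      then show ?thesis using F hs unfolding V2_def t_def by (auto intro!: image_eqI[of _ _ h])
    qed
  qed
  have "card (makespan s \<epsilon> n ` local_optima s \<epsilon> n) \<le> card (V1 \<union> V2)"
    by (rule card_mono[OF _ sub]) (auto simp: V1_def V2_def)
  also have "\<dots> \<le> card V1 + card V2" by (rule card_Un_le)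
  also have "\<dots> \<le> (s+1) + (s+1)"
  proof -
    have "card V1 \<le> card {0..s}" unfolding V1_def by (rule card_image_le) simp
    moreover have "card V2 \<le> card {0..s}" unfolding V2_def by (rule card_image_le) simp
    ultimately show ?thesis by simp
  qed
  finally show "real (card (makespan s \<epsilon> n ` local_optima s \<epsilon> n)) \<le> 2 * (real s + 1)"
  proof -
    assume "card (makespan s \<epsilon> n ` local_optima s \<epsilon> n) \<le> s + 1 + (s + 1)"
    then have "real (card (makespan s \<epsilon> n ` local_optima s \<epsilon> n)) \<le> real (s + 1 + (s + 1))"
      by (simp only: of_nat_le_iff)
    then show ?thesis by simp
  qed
qed

lemma part3:
  assumes evs: "even s"
  shows "\<exists>c>0. \<exists>a>0. \<forall>\<^sub>F n in sequentially. even n \<longrightarrow>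
            (\<forall>x\<in>sols n. makespan s \<epsilon> n x > 1/2 \<longrightarrow>
               ((real (ksmall s \<epsilon> n x) \<ge> c * real n \<and> x \<notin> local_optima s \<epsilon> n)
                \<or> real (max (ksmall s \<epsilon> n x) (n - s - ksmall s \<epsilon> n x))
                    \<ge> (1/2 + a) * (real n - real s)))"
proof -
  define L where "L = LL s \<epsilon>"
  define K where "K = KK s \<epsilon>"
  have Lpos: "L > 0" using LL_pos L_def by simp
  have Kpos: "K > 0" using KK_pos K_def by simp
  define a where "a = min (1/4) (L / (4 * K))"
  have apos: "a > 0" unfolding a_def using Lpos Kpos by simp
  have a4: "a \<le> 1/4" unfolding a_def by simp
  have aK: "a * K \<le> L / 4"
  proof -
    have "a \<le> L / (4 * K)" unfolding a_def by simp
    then have "a * K \<le> L / (4 * K) * K" using Kpos by (intro mult_right_mono) auto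
    then show ?thesis using Kpos by simp
  qed
  define N where "N = 2 * s + 1 + nat \<lceil>2 * K / L\<rceil>"
  have "\<forall>\<^sub>F n in sequentially. even n \<longrightarrow>
            (\<forall>x\<in>sols n. makespan s \<epsilon> n x > 1/2 \<longrightarrow>
               ((real (ksmall s \<epsilon> n x) \<ge> 1/8 * real n \<and> x \<notin> local_optima s \<epsilon> n)
                \<or> real (max (ksmall s \<epsilon> n x) (n - s - ksmall s \<epsilon> n x))
                    \<ge> (1/2 + a) * (real n - real s)))"
  proof (intro eventually_sequentiallyI[of N] impI ballI)
    fix n x assume nN: "N \<le> n" and evn: "even n" and x: "x \<in> sols n" and Fh: "makespan s \<epsilon> n x > 1/2"
    have sn: "s < n" using nN N_def by simp
    define m where "m = n - s"
    define S where "S = SS s \<epsilon> n"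
    define h where "h = hlarge s \<epsilon> n x"
    define k where "k = ksmall s \<epsilon> n x"
    define F where "F = makespan s \<epsilon> n x"
    have rm: "real m = real n - real s" unfolding m_def using sn by (simp add: of_nat_diff)
    have mpos: "real m > 0" using sn rm by simp
    have evm: "even m" unfolding m_def using evs evn sn by simp
    have km: "k \<le> m" using ksmall_le k_def m_def by simp
    have hs: "h \<le> s" using hlarge_le h_def by simp
    have Spos: "S > 0" using SS_pos[OF sn] S_def by simp
    have mS: "real m * S = K" unfolding S_def SS_def K_def rm using mpos rm by simp
    have tot: "real s * L + real m * S = 1" using total1[OF sn] L_def S_def rm by simp
    have FF: "F = real h * L + real k * S" using rep[OF x sn] F_def h_def k_def L_def S_def by simp
    have mbig: "real m > 2 * K / L"
    proof -
      have "2 * K / L \<le> real (nat \<lceil>2 * K / L\<rceil>)" by linarith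
      moreover have "real (nat \<lceil>2 * K / L\<rceil>) < real m" using nN unfolding N_def m_def by simp
      ultimately show ?thesis by simp
    qed
    have SL: "S < L / 2"
    proof -
      have "2 * K < real m * L" using mbig Lpos by (simp add: divide_less_eq)
      then have "2 * (real m * S) < real m * L" using mS by simp
      then have "2 * S < L" using mpos by simp
      then show ?thesis by simp
    qed
    have m2: "real m \<ge> real n / 2" using rm nN N_def by simp
    show "(real k \<ge> 1/8 * real n \<and> x \<notin> local_optima s \<epsilon> n)
                \<or> real (max k (n - s - k)) \<ge> (1/2 + a) * (real n - real s)"
      unfolding k_def[symmetric]
    proof (rule disjCI)
      assume "\<not> real (max k (n - s - k)) \<ge> (1/2 + a) * (real n - real s)"
      then have b1: "real k < (1/2 + a) * real m" and b2: "real m - real k < (1/2 + a) * real m"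
        using km unfolding rm[symmetric] m_def[symmetric] by (auto simp: of_nat_diff)
      have dev: "\<bar>real k - real m / 2\<bar> < a * real m" using b1 b2 by (simp add: algebra_simps)
      have Fdec: "F - 1/2 = (real h - real s / 2) * L + (real k - real m / 2) * S"
        using FF tot by (simp add: algebra_simps)
      have Fgt: "F > (1 + S) / 2"
      proof (cases "2 * h = s")
        case True
        then have "real s = 2 * real h" by (metis of_nat_mult of_nat_numeral)
        then have "real h - real s / 2 = 0" by simp
        then have Feq: "F - 1/2 = (real k - real m / 2) * S" using Fdec by simp
        moreover have "F - 1/2 > 0" using Fh F_def by simp
        ultimately have "(real k - real m / 2) * S > 0" by simp
        then have "real k - real m / 2 > 0" using Spos by (simp add: zero_less_mult_iff)
        then have "2 * k > m" by linarith
        then have "2 * k \<ge> m + 2" using evm by presburger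
        then have "real k - real m / 2 \<ge> 1" by linarith
        then have kS: "(real k - real m / 2) * S \<ge> 1 * S" using Spos by (intro mult_right_mono) auto
        have "F - 1/2 \<ge> S" using kS Feq by simp
        moreover have "(1 + S) / 2 = 1/2 + S/2" by simp
        ultimately show ?thesis using Spos by linarith
      next
        case False
        then have "\<bar>2 * real h - real s\<bar> \<ge> 1" by linarith
        then have "\<bar>real h - real s / 2\<bar> \<ge> 1/2" by linarith
        then have t1: "\<bar>(real h - real s / 2) * L\<bar> \<ge> L / 2" using Lpos
          by (simp add: abs_mult mult_right_mono[of "1/2" _ L, simplified])
        have "\<bar>(real k - real m / 2) * S\<bar> \<le> a * real m * S" using dev Spos
          by (simp add: abs_mult mult_right_mono less_imp_le)
        also have "\<dots> = a * K" using mS by simp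
        finally have t2: "\<bar>(real k - real m / 2) * S\<bar> \<le> L / 4" using aK by simp
        have "F - 1/2 > 0" using Fh F_def by simp
        then have "F - 1/2 \<ge> L / 4" using Fdec t1 t2 by linarith
        then show ?thesis using SL by simp
      qed
      have "a * real m \<le> 1/4 * real m" using a4 mpos by (intro mult_right_mono) auto
      then have kpos: "real k > real m / 4" using dev by (simp add: abs_less_iff)
      then have "k \<noteq> 0" by auto
      then have "{i\<in>{s+1..n}. x i = fuller s \<epsilon> n x} \<noteq> {}" using k_def unfolding ksmall_def by (metis card.empty)
      then obtain i where i: "i \<in> {s+1..n}" "x i = fuller s \<epsilon> n x" by blast
      have "x \<notin> local_optima s \<epsilon> n" using flip[OF x sn i] Fgt F_def S_def by simp
      moreover have "real k \<ge> 1/8 * real n" using kpos m2 by simp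
      ultimately show "real k \<ge> 1/8 * real n \<and> x \<notin> local_optima s \<epsilon> n" by simp
    qed
  qed
  then show ?thesis using apos by (intro exI[of _ "1/8"] exI[of _ a]) auto
qed

end

theorem mainTheorem12:
  fixes s :: nat and \<epsilon> :: real
  assumes "even s" and "s \<ge> 2" and "0 < \<epsilon>" and "\<epsilon> < 1 / (2 * real s - 1)"
  shows "(\<exists>C. \<forall>\<^sub>F n in sequentially. even n \<longrightarrow>
            real (card (makespan s \<epsilon> n ` sols n)) \<le> C * real n)
       \<and> (\<exists>C. \<forall>\<^sub>F n in sequentially. even n \<longrightarrow>
            real (card (makespan s \<epsilon> n ` local_optima s \<epsilon> n)) \<le> C)
       \<and> (\<exists>c>0. \<exists>a>0. \<forall>\<^sub>F n in sequentially. even n \<longrightarrow>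
            (\<forall>x\<in>sols n. makespan s \<epsilon> n x > 1/2 \<longrightarrow>
               ((real (ksmall s \<epsilon> n x) \<ge> c * real n \<and> x \<notin> local_optima s \<epsilon> n)
                \<or> real (max (ksmall s \<epsilon> n x) (n - s - ksmall s \<epsilon> n x))
                    \<ge> (1/2 + a) * (real n - real s))))"
  using part1[OF assms(2-4)] part2[OF assms(2-4)] part3[OF assms(2-4) assms(1)] by blast

end
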